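(* In the Balanced RePartitioning problem without augmentation, for any cluster size $k\ge 2$, any migration cost $\alpha\ge 1$, and independently of the number of clusters $\ell$, no deterministic online algorithm can achieve a competitive ratio smaller than $k+\frac{k-2}{2\alpha}$.
   Context: Balanced RePartitioning (BRP): a set $V$ of $n$ nodes is initially distributed across $\ell$ clusters, each of capacity $k$; without augmentation $n=k\ell$. A sequence $\sigma$ of communication requests $\{u_t,v_t\}$ between pairs of nodes arrives online. Before serving request $\sigma_t$, an algorithm may repartition the nodes (respecting capacities) by migrating nodes between clusters at cost $\alpha\ge 1$ per node migration; the request then costs $0$ if $u_t,v_t$ are in the same cluster and $1$ otherwise. The cost of an algorithm on $\sigma$ is total migration plus communication cost. $\textsc{Off}$ is an optimal offline algorithm knowing $\sigma$ in advance; online and offline algorithms start from the same initial configuration. The competitive ratio of an online algorithm $\textsc{On}$ is $\max_\sigma \textsc{On}(\sigma)/\textsc{Off}(\sigma)$. *)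

theory Defs
  imports Complex_Main
begin

text \<open>Balanced RePartitioning without augmentation.
  Nodes are 0,...,k*l-1, clusters are 0,...,l-1, each of capacity k.
  A configuration maps each node to its cluster.\<close>

definition valid_conf :: "nat \<Rightarrow> nat \<Rightarrow> (nat \<Rightarrow> nat) \<Rightarrow> bool" where
  "valid_conf k l C \<longleftrightarrow>
     (\<forall>v < k * l. C v < l) \<and> (\<forall>c < l. card {v. v < k * l \<and> C v = c} \<le> k)"

definition migrations :: "nat \<Rightarrow> nat \<Rightarrow> (nat \<Rightarrow> nat) \<Rightarrow> (nat \<Rightarrow> nat) \<Rightarrow> nat" where
  "migrations k l C C' = card {v. v < k * l \<and> C v \<noteq> C' v}"

definition valid_reqs :: "nat \<Rightarrow> nat \<Rightarrow> (nat \<times> nat) list \<Rightarrow> bool" where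
  "valid_reqs k l \<sigma> \<longleftrightarrow> (\<forall>(u, v) \<in> set \<sigma>. u < k * l \<and> v < k * l \<and> u \<noteq> v)"

text \<open>Cost of serving \<sigma> starting in configuration init, where Cs ! t is the
  configuration (after repartitioning) in which request \<sigma> ! t is served.\<close>
definition sched_cost :: "nat \<Rightarrow> nat \<Rightarrow> real \<Rightarrow> (nat \<Rightarrow> nat) \<Rightarrow> (nat \<Rightarrow> nat) list
    \<Rightarrow> (nat \<times> nat) list \<Rightarrow> real" where
  "sched_cost k l \<alpha> init Cs \<sigma> =
     (\<Sum>t < length \<sigma>. \<alpha> * real (migrations k l ((init # Cs) ! t) (Cs ! t))
        + (if (Cs ! t) (fst (\<sigma> ! t)) = (Cs ! t) (snd (\<sigma> ! t)) then 0 else 1))"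

definition off_cost :: "nat \<Rightarrow> nat \<Rightarrow> real \<Rightarrow> (nat \<Rightarrow> nat) \<Rightarrow> (nat \<times> nat) list \<Rightarrow> real" where
  "off_cost k l \<alpha> init \<sigma> =
     (INF Cs \<in> {Cs. length Cs = length \<sigma> \<and> (\<forall>C \<in> set Cs. valid_conf k l C)}.
        sched_cost k l \<alpha> init Cs \<sigma>)"

text \<open>A deterministic online algorithm: given the requests seen so far, including the
  current one, it outputs the configuration in which the current request is served.\<close>
definition online_alg :: "nat \<Rightarrow> nat \<Rightarrow> ((nat \<times> nat) list \<Rightarrow> nat \<Rightarrow> nat) \<Rightarrow> bool" where
  "online_alg k l A \<longleftrightarrow> (\<forall>\<rho>. \<rho> \<noteq> [] \<and> valid_reqs k l \<rho> \<longrightarrow> valid_conf k l (A \<rho>))"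

definition on_confs :: "((nat \<times> nat) list \<Rightarrow> nat \<Rightarrow> nat) \<Rightarrow> (nat \<times> nat) list \<Rightarrow> (nat \<Rightarrow> nat) list" where
  "on_confs A \<sigma> = map (\<lambda>t. A (take (Suc t) \<sigma>)) [0..<length \<sigma>]"

definition on_cost :: "nat \<Rightarrow> nat \<Rightarrow> real \<Rightarrow> (nat \<Rightarrow> nat) \<Rightarrow> ((nat \<times> nat) list \<Rightarrow> nat \<Rightarrow> nat)
    \<Rightarrow> (nat \<times> nat) list \<Rightarrow> real" where
  "on_cost k l \<alpha> init A \<sigma> = sched_cost k l \<alpha> init (on_confs A \<sigma>) \<sigma>"

end

theory Submission
  imports Defs
begin


lemma full_clusters:
  assumes v: "valid_conf k l C" and c: "c < l"
  shows "card {v. v < k * l \<and> C v = c} = k"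
proof -
  let ?F = "\<lambda>c. {v. v < k * l \<and> C v = c}"
  have le: "\<And>c. c < l \<Longrightarrow> card (?F c) \<le> k" using v unfolding valid_conf_def by auto
  have U: "{..<k*l} = (\<Union>c\<in>{..<l}. ?F c)" using v unfolding valid_conf_def by auto
  have "card {..<k*l} = (\<Sum>c\<in>{..<l}. card (?F c))"
    unfolding U by (rule card_UN_disjoint) auto
  hence S: "(\<Sum>c\<in>{..<l}. card (?F c)) = k * l" by simp
  show ?thesis
  proof (rule ccontr)
    assume "card (?F c) \<noteq> k"
    with le[OF c] have lt: "card (?F c) < k" by simp
    have "(\<Sum>c\<in>{..<l}. card (?F c)) < (\<Sum>c\<in>{..<l}. k)"
      by (rule sum_strict_mono_ex1) (use le c lt in auto)
    with S show False by simp
  qed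
qed

lemma mig_not_one:
  assumes v: "valid_conf k l C" and v': "valid_conf k l C'"
  shows "migrations k l C C' \<noteq> 1"
proof
  assume "migrations k l C C' = 1"
  then obtain v0 where V: "{v. v < k * l \<and> C v \<noteq> C' v} = {v0}"
    unfolding migrations_def by (auto simp: card_Suc_eq)
  hence v0: "v0 < k*l" "C v0 \<noteq> C' v0" by auto
  have oth: "\<And>w. w < k*l \<Longrightarrow> w \<noteq> v0 \<Longrightarrow> C w = C' w" using V by blast
  let ?b = "C' v0"
  have b: "?b < l" using v' v0 unfolding valid_conf_def by auto
  have eq: "{w. w < k*l \<and> C' w = ?b} = insert v0 {w. w < k*l \<and> C w = ?b}"
    using oth v0 by auto (metis)
  have "card {w. w < k*l \<and> C' w = ?b} = Suc (card {w. w < k*l \<and> C w = ?b})"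
    unfolding eq by (rule card_insert_disjoint) (use v0 in auto)
  also have "\<dots> = Suc k" using full_clusters[OF v b] by simp
  finally show False using v' b unfolding valid_conf_def by fastforce
qed

lemma mig_le: "migrations k l C C' \<le> k * l"
proof -
  have "{v. v < k * l \<and> C v \<noteq> C' v} \<subseteq> {..<k*l}" by auto
  from card_mono[OF _ this] show ?thesis unfolding migrations_def by simp
qed

lemma mig_zero: "migrations k l C C' = 0 \<longleftrightarrow> (\<forall>v<k*l. C v = C' v)"
  unfolding migrations_def by auto



definition sw :: "nat \<Rightarrow> nat \<Rightarrow> nat \<Rightarrow> nat" where
  "sw a b v = (if v = a then b else if v = b then a else v)"

lemma sw_sw[simp]: "sw a b (sw a b v) = v" unfolding sw_def by auto
lemma inj_sw: "inj (sw a b)" by (metis injI sw_sw)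

definition E :: "nat \<Rightarrow> nat \<Rightarrow> nat \<Rightarrow> nat" where
  "E k i v = sw i k v div k"

lemma E_valid:
  assumes "1 \<le> i" "i \<le> k" "k \<ge> 2" "l \<ge> 2"
  shows "valid_conf k l (E k i)"
  unfolding valid_conf_def
proof (intro conjI allI impI)
  have kl: "k < k * l" proof -
    have "k * 1 < k * l" using assms by (intro mult_strict_left_mono) auto
    thus ?thesis by simp
  qed
  fix v assume "v < k * l"
  hence "sw i k v < k * l" using kl assms unfolding sw_def by auto
  thus "E k i v < l" unfolding E_def by (simp add: less_mult_imp_div_less mult.commute)
next
  fix c assume "c < l"
  have "{v. v < k * l \<and> E k i v = c} \<subseteq> sw i k ` {c*k..<c*k+k}"
  proof
    fix v assume "v \<in> {v. v < k * l \<and> E k i v = c}"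
    hence "sw i k v div k = c" unfolding E_def by simp
    moreover have "sw i k v = sw i k v div k * k + sw i k v mod k" by simp
    moreover have "sw i k v mod k < k" using assms by simp
    ultimately have "sw i k v \<in> {c*k..<c*k+k}" by (metis atLeastLessThan_iff add_less_cancel_left le_add1)
    thus "v \<in> sw i k ` {c*k..<c*k+k}" by (metis image_eqI sw_sw)
  qed
  from card_mono[OF _ this] have "card {v. v < k * l \<and> E k i v = c} \<le> card (sw i k ` {c*k..<c*k+k})" by simp
  also have "\<dots> \<le> k" using card_image_le[of "{c*k..<c*k+k}" "sw i k"] by simp
  finally show "card {v. v < k * l \<and> E k i v = c} \<le> k" .
qed

lemma E_mig:
  assumes "i \<le> k" "j \<le> k" "k \<ge> 2"
  shows "migrations k l (E k i) (E k j) \<le> (if i = j then 0 else 2)"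
proof -
  have "{v. v < k * l \<and> E k i v \<noteq> E k j v} \<subseteq> {i, j}"
  proof
    fix v assume "v \<in> {v. v < k * l \<and> E k i v \<noteq> E k j v}"
    hence ne: "E k i v \<noteq> E k j v" by simp
    show "v \<in> {i,j}"
    proof (rule ccontr)
      assume "v \<notin> {i,j}"
      hence "v \<noteq> i" "v \<noteq> j" by auto
      show False
      proof (cases "v = k")
        case True
        hence "i < k" "j < k" using \<open>v \<noteq> i\<close> \<open>v \<noteq> j\<close> assms by auto
        thus False using ne True \<open>v \<noteq> i\<close> \<open>v \<noteq> j\<close> unfolding E_def sw_def by auto
      next
        case False
        thus False using ne \<open>v \<noteq> i\<close> \<open>v \<noteq> j\<close> unfolding E_def sw_def by auto
      qed
    qed
  qed
  from card_mono[OF _ this] have "migrations k l (E k i) (E k j) \<le> card {i,j}" unfolding migrations_def by simp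
  moreover have "card {i,j} \<le> 2" by (simp add: card_insert_le_m1)
  ultimately show ?thesis unfolding migrations_def by (cases "i = j") auto
qed

lemma E_comm:
  assumes "1 \<le> q" "q \<le> k" "1 \<le> i" "i \<le> k"
  shows "(E k i 0 = E k i q) \<longleftrightarrow> q \<noteq> i"
  using assms unfolding E_def sw_def by auto



definition lf :: "nat \<Rightarrow> (nat \<Rightarrow> nat) \<Rightarrow> nat" where
  "lf k C = (LEAST i. 1 \<le> i \<and> i \<le> k \<and> C i \<noteq> C 0)"

lemma kl_less: "k \<ge> 2 \<Longrightarrow> l \<ge> 2 \<Longrightarrow> k < k * (l::nat)"
proof -
  assume "k \<ge> 2" "l \<ge> 2"
  hence "k * 1 < k * l" by (intro mult_strict_left_mono) auto
  thus ?thesis by simp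
qed

lemma lf_ok:
  assumes v: "valid_conf k l C" and k: "k \<ge> 2" and l: "l \<ge> 2"
  shows "1 \<le> lf k C \<and> lf k C \<le> k \<and> C (lf k C) \<noteq> C 0"
proof -
  have kl: "k < k * l" using kl_less[OF k l] .
  have "\<exists>i. 1 \<le> i \<and> i \<le> k \<and> C i \<noteq> C 0"
  proof (rule ccontr)
    assume "\<not> ?thesis"
    hence all: "\<forall>i\<le>k. C i = C 0"
      by (metis One_nat_def Suc_leI neq0_conv)
    have "{..k} \<subseteq> {v. v < k * l \<and> C v = C 0}"
    proof
      fix v assume "v \<in> {..k}"
      hence "v \<le> k" by simp
      thus "v \<in> {v. v < k * l \<and> C v = C 0}" using le_less_trans[OF _ kl] all by blast
    qed
    from card_mono[OF _ this] have "Suc k \<le> card {v. v < k * l \<and> C v = C 0}" by simp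
    moreover have "C 0 < l" using v le_less_trans[OF _ kl, of 0] unfolding valid_conf_def by blast
    hence "card {v. v < k * l \<and> C v = C 0} \<le> k" using v unfolding valid_conf_def by blast
    ultimately show False by linarith
  qed
  then show ?thesis unfolding lf_def by (rule LeastI_ex)
qed

lemma lf_cong:
  assumes "\<forall>v<k*l. C v = C' v" "k < k * l"
  shows "lf k C = lf k C'"
proof -
  have "\<And>i. (1 \<le> i \<and> i \<le> k \<and> C i \<noteq> C 0) = (1 \<le> i \<and> i \<le> k \<and> C' i \<noteq> C' 0)"
    using assms(1) le_less_trans[OF _ assms(2)] by (metis le0)
  thus ?thesis unfolding lf_def by simp
qed

primrec adv :: "nat \<Rightarrow> (nat \<Rightarrow> nat) \<Rightarrow> ((nat \<times> nat) list \<Rightarrow> nat \<Rightarrow> nat) \<Rightarrow> nat \<Rightarrow> (nat \<times> nat) list" where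
  "adv k init A 0 = []"
| "adv k init A (Suc n) = adv k init A n @ [(0, lf k (if n = 0 then init else A (adv k init A n)))]"

definition pcf :: "nat \<Rightarrow> (nat \<Rightarrow> nat) \<Rightarrow> ((nat \<times> nat) list \<Rightarrow> nat \<Rightarrow> nat) \<Rightarrow> nat \<Rightarrow> nat \<Rightarrow> nat" where
  "pcf k init A n = (if n = 0 then init else A (adv k init A n))"

lemma adv_Suc: "adv k init A (Suc n) = adv k init A n @ [(0, lf k (pcf k init A n))]"
  unfolding pcf_def by simp

lemma adv_len[simp]: "length (adv k init A n) = n"
  by (induction n) auto

lemma adv_take: "m \<le> n \<Longrightarrow> take m (adv k init A n) = adv k init A m"
proof (induction n)
  case 0 thus ?case by simp
next
  case (Suc n)
  show ?case
  proof (cases "m = Suc n")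
    case True thus ?thesis by simp
  next
    case False
    hence "m \<le> n" using Suc by simp
    thus ?thesis using Suc by (simp add: adv_Suc)
  qed
qed

lemma adv_nth: "t < n \<Longrightarrow> adv k init A n ! t = (0, lf k (pcf k init A t))"
proof (induction n)
  case 0 thus ?case by simp
next
  case (Suc n)
  thus ?case by (cases "t = n") (auto simp: adv_Suc nth_append pcf_def)
qed

lemma adv_valid:
  assumes k: "k \<ge> 2" and l: "l \<ge> 2" and vi: "valid_conf k l init" and on: "online_alg k l A"
  shows "valid_reqs k l (adv k init A n) \<and> valid_conf k l (pcf k init A n)"
proof (induction n)
  case 0 thus ?case using vi by (simp add: pcf_def valid_reqs_def)
next
  case (Suc n)
  have kl: "k < k * l" using kl_less[OF k l] .
  have r: "valid_reqs k l (adv k init A (Suc n))"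
  proof -
    have v: "valid_conf k l (pcf k init A n)" using Suc by blast
    have o: "1 \<le> lf k (pcf k init A n)" "lf k (pcf k init A n) \<le> k" using lf_ok[OF v k l] by auto
    hence "lf k (pcf k init A n) < k * l" "0 < k * l" "0 \<noteq> lf k (pcf k init A n)"
      using le_less_trans[OF o(2) kl] l by auto
    moreover have "valid_reqs k l (adv k init A n)" using Suc by blast
    ultimately show ?thesis unfolding adv_Suc valid_reqs_def by auto
  qed
  have "adv k init A (Suc n) \<noteq> []" by (simp add: adv_Suc)
  hence vA: "valid_conf k l (A (adv k init A (Suc n)))" using on r unfolding online_alg_def by blast
  have e: "pcf k init A (Suc n) = A (adv k init A (Suc n))" unfolding pcf_def by (simp del: adv.simps)
  show ?case unfolding e by (rule conjI[OF r vA])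
qed

lemma on_cost_eq:
  "on_cost k l \<alpha> init A (adv k init A T) =
     (\<Sum>t<T. \<alpha> * real (migrations k l (pcf k init A t) (pcf k init A (Suc t)))
        + (if pcf k init A (Suc t) 0 = pcf k init A (Suc t) (lf k (pcf k init A t)) then 0 else 1))"
proof -
  have oc: "\<And>t. t < T \<Longrightarrow> on_confs A (adv k init A T) ! t = pcf k init A (Suc t)"
    unfolding on_confs_def by (simp add: adv_take pcf_def)
  have pc: "\<And>t. t < T \<Longrightarrow> (init # on_confs A (adv k init A T)) ! t = pcf k init A t"
  proof -
    fix t assume t: "t < T"
    show "(init # on_confs A (adv k init A T)) ! t = pcf k init A t"
    proof (cases t)
      case 0 thus ?thesis by (simp add: pcf_def)
    next
      case (Suc t') thus ?thesis using oc[of t'] t by simp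
    qed
  qed
  show ?thesis unfolding on_cost_def sched_cost_def
  proof (rule sum.cong)
    fix t assume "t \<in> {..<T}"
    hence t: "t < T" by simp
    show "\<alpha> * real (migrations k l ((init # on_confs A (adv k init A T)) ! t) (on_confs A (adv k init A T) ! t)) +
        (if (on_confs A (adv k init A T) ! t) (fst (adv k init A T ! t)) = (on_confs A (adv k init A T) ! t) (snd (adv k init A T ! t)) then 0 else 1)
      = \<alpha> * real (migrations k l (pcf k init A t) (pcf k init A (Suc t)))
        + (if pcf k init A (Suc t) 0 = pcf k init A (Suc t) (lf k (pcf k init A t)) then 0 else 1)"
      unfolding oc[OF t] pc[OF t] adv_nth[OF t] by simp
  qed simp
qed



lemma sched_nonneg: "\<alpha> \<ge> 0 \<Longrightarrow> sched_cost k l \<alpha> init Cs \<sigma> \<ge> 0"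
  unfolding sched_cost_def by (intro sum_nonneg) auto

lemma off_le:
  assumes "\<alpha> \<ge> 0" "length Cs = length \<sigma>" "\<forall>C\<in>set Cs. valid_conf k l C"
  shows "off_cost k l \<alpha> init \<sigma> \<le> sched_cost k l \<alpha> init Cs \<sigma>"
  unfolding off_cost_def
proof (rule cINF_lower)
  show "bdd_below ((\<lambda>Cs. sched_cost k l \<alpha> init Cs \<sigma>) ` {Cs. length Cs = length \<sigma> \<and> (\<forall>C\<in>set Cs. valid_conf k l C)})"
    using sched_nonneg[OF assms(1)] by (intro bdd_belowI[of _ 0]) auto
qed (use assms in auto)

lemma off_nonneg:
  assumes "\<alpha> \<ge> 0" "valid_conf k l init"
  shows "off_cost k l \<alpha> init \<sigma> \<ge> 0"
  unfolding off_cost_def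
proof (rule cINF_greatest)
  show "{Cs. length Cs = length \<sigma> \<and> (\<forall>C\<in>set Cs. valid_conf k l C)} \<noteq> {}"
  proof -
    have "replicate (length \<sigma>) init \<in> {Cs. length Cs = length \<sigma> \<and> (\<forall>C\<in>set Cs. valid_conf k l C)}"
      using assms by auto
    thus ?thesis by blast
  qed
qed (use sched_nonneg[OF assms(1)] in auto)

definition nt :: "nat \<Rightarrow> nat \<Rightarrow> (nat \<Rightarrow> nat) \<Rightarrow> ((nat \<times> nat) list \<Rightarrow> nat \<Rightarrow> nat) \<Rightarrow> nat \<Rightarrow> real" where
  "nt k l init A t = (if migrations k l (pcf k init A t) (pcf k init A (Suc t)) = 0 then 0 else 1)"

lemma on_lb:
  assumes k: "k \<ge> 2" and l: "l \<ge> 2" and vi: "valid_conf k l init" and on: "online_alg k l A"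
    and a: "\<alpha> \<ge> 1"
  shows "on_cost k l \<alpha> init A (adv k init A T) \<ge> (\<Sum>t<T. 1 + (2*\<alpha> - 1) * nt k l init A t)"
  unfolding on_cost_eq
proof (rule sum_mono)
  fix t assume "t \<in> {..<T}"
  let ?C = "pcf k init A t" and ?D = "pcf k init A (Suc t)"
  have vC: "valid_conf k l ?C" and vD: "valid_conf k l ?D" using adv_valid[OF k l vi on] by blast+
  have kl: "k < k * l" using kl_less[OF k l] .
  have q: "1 \<le> lf k ?C" "lf k ?C \<le> k" "?C (lf k ?C) \<noteq> ?C 0" using lf_ok[OF vC k l] by auto
  show "1 + (2*\<alpha> - 1) * nt k l init A t \<le> \<alpha> * real (migrations k l ?C ?D) + (if ?D 0 = ?D (lf k ?C) then 0 else 1)"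
  proof (cases "migrations k l ?C ?D = 0")
    case True
    hence eq: "\<forall>v<k*l. ?C v = ?D v" by (simp add: mig_zero)
    have "lf k ?C < k * l" "0 < k * l" using q kl by linarith+
    hence "?D 0 \<noteq> ?D (lf k ?C)" using eq q(3) by metis
    thus ?thesis using True unfolding nt_def by simp
  next
    case False
    hence "migrations k l ?C ?D \<ge> 2" using mig_not_one[OF vC vD] by linarith
    hence "\<alpha> * real (migrations k l ?C ?D) \<ge> \<alpha> * 2" using a
      by (intro mult_left_mono) auto
    thus ?thesis using False unfolding nt_def by simp
  qed
qed



lemma sum_if0: fixes T :: nat assumes "(a::real) \<ge> 0" shows "(\<Sum>t<T. if t = 0 then a else 0) \<le> a"
  by (induction T) (use assms in auto)

lemma static_cost:
  assumes k: "k \<ge> 2" and l: "l \<ge> 2" and vi: "valid_conf k l init" and on: "online_alg k l A"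
    and a: "\<alpha> \<ge> 1" and i: "1 \<le> i" "i \<le> k"
  shows "sched_cost k l \<alpha> init (replicate T (E k i)) (adv k init A T)
     \<le> \<alpha> * real (k*l) + (\<Sum>t<T. if lf k (pcf k init A t) = i then 1 else 0)"
proof -
  have "sched_cost k l \<alpha> init (replicate T (E k i)) (adv k init A T)
     \<le> (\<Sum>t<T. (if t = 0 then \<alpha> * real (k*l) else 0) + (if lf k (pcf k init A t) = i then 1 else 0))"
    unfolding sched_cost_def adv_len
  proof (rule sum_mono)
    fix t assume "t \<in> {..<T}"
    hence t: "t < T" by simp
    have vC: "valid_conf k l (pcf k init A t)" using adv_valid[OF k l vi on] by blast
    have q: "1 \<le> lf k (pcf k init A t)" "lf k (pcf k init A t) \<le> k" using lf_ok[OF vC k l] by auto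
    have comm: "(if (replicate T (E k i) ! t) (fst (adv k init A T ! t)) = (replicate T (E k i) ! t) (snd (adv k init A T ! t)) then 0 else 1)
      = (if lf k (pcf k init A t) = i then 1 else (0::real))"
      using E_comm[OF q i] t by (simp add: adv_nth)
    have mig: "\<alpha> * real (migrations k l ((init # replicate T (E k i)) ! t) (replicate T (E k i) ! t)) \<le> (if t = 0 then \<alpha> * real (k*l) else 0)"
    proof (cases t)
      case 0
      have "real (migrations k l init (E k i)) \<le> real (k*l)" using mig_le[of k l init "E k i"] by linarith
      hence "\<alpha> * real (migrations k l init (E k i)) \<le> \<alpha> * real (k*l)" using a by (intro mult_left_mono) auto
      thus ?thesis using 0 t by simp
    next
      case (Suc t')
      hence "migrations k l ((init # replicate T (E k i)) ! t) (replicate T (E k i) ! t) = 0"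
        using t by (simp add: mig_zero)
      thus ?thesis using Suc by simp
    qed
    show "\<alpha> * real (migrations k l ((init # replicate T (E k i)) ! t) (replicate T (E k i) ! t)) +
        (if (replicate T (E k i) ! t) (fst (adv k init A T ! t)) = (replicate T (E k i) ! t) (snd (adv k init A T ! t)) then 0 else 1)
      \<le> (if t = 0 then \<alpha> * real (k*l) else 0) + (if lf k (pcf k init A t) = i then 1 else 0)"
      using mig comm by linarith
  qed
  also have "\<dots> = (\<Sum>t<T. if t = 0 then \<alpha> * real (k*l) else 0) + (\<Sum>t<T. if lf k (pcf k init A t) = i then 1 else 0)"
    by (rule sum.distrib)
  also have "\<dots> \<le> \<alpha> * real (k*l) + (\<Sum>t<T. if lf k (pcf k init A t) = i then 1 else 0)"
    using sum_if0[of "\<alpha> * real (k*l)" T] a by simp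
  finally show ?thesis .
qed

primrec hp :: "(nat \<Rightarrow> nat) \<Rightarrow> nat \<Rightarrow> nat \<Rightarrow> nat" where
  "hp q 0 = sw 1 (q 0)"
| "hp q (Suc t) = sw (q t) (q (Suc t)) \<circ> hp q t"

lemma hp_one: "hp q t 1 = q t"
  by (induction t) (auto simp: sw_def)

lemma hp_inj: "inj (hp q t)"
proof (induction t)
  case 0 thus ?case by (simp add: inj_sw)
next
  case (Suc t) thus ?case by (simp only: hp.simps) (rule inj_compose[OF inj_sw Suc.IH])
qed

lemma hp_range:
  assumes "\<forall>t. 1 \<le> q t \<and> q t \<le> k" "1 \<le> j" "j \<le> k"
  shows "1 \<le> hp q t j \<and> hp q t j \<le> k"
  using assms by (induction t) (auto simp: sw_def)

lemma hp_ne: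
  assumes "j \<noteq> 1" shows "hp q t j \<noteq> q t"
  using hp_inj[of q t] hp_one[of q t] assms by (metis injD)

lemma hp_step:
  assumes "j \<noteq> 1" "hp q (Suc t) j \<noteq> hp q t j"
  shows "hp q t j = q (Suc t) \<and> q t \<noteq> q (Suc t)"
  using assms hp_ne[OF assms(1), of q t] by (auto simp: sw_def split: if_splits)



lemma q_range:
  assumes k: "k \<ge> 2" and l: "l \<ge> 2" and vi: "valid_conf k l init" and on: "online_alg k l A"
  shows "1 \<le> lf k (pcf k init A t) \<and> lf k (pcf k init A t) \<le> k"
  using lf_ok[of k l "pcf k init A t"] adv_valid[OF k l vi on] k l by blast

lemma hole_cost:
  assumes k: "k \<ge> 2" and l: "l \<ge> 2" and vi: "valid_conf k l init" and on: "online_alg k l A"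
    and a: "\<alpha> \<ge> 1" and j: "2 \<le> j" "j \<le> k"
    and qd: "q = (\<lambda>t. lf k (pcf k init A t))"
  shows "sched_cost k l \<alpha> init (map (\<lambda>t. E k (hp q t j)) [0..<T]) (adv k init A T)
     \<le> (\<Sum>t<T. if t = 0 then \<alpha> * real (k*l) else 2*\<alpha>*(if hp q (t-1) j = q t \<and> q (t-1) \<noteq> q t then 1 else 0))"
  unfolding sched_cost_def adv_len
proof (rule sum_mono)
  fix t assume "t \<in> {..<T}"
  hence t: "t < T" by simp
  have qr: "\<forall>t. 1 \<le> q t \<and> q t \<le> k" using q_range[OF k l vi on] qd by simp
  have j1: "j \<noteq> 1" using j by simp
  have hr: "\<And>t. 1 \<le> hp q t j \<and> hp q t j \<le> k" using hp_range[OF qr, of j] j by simp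
  have Ct: "map (\<lambda>t. E k (hp q t j)) [0..<T] ! t = E k (hp q t j)" using t by simp
  have comm: "(if (map (\<lambda>t. E k (hp q t j)) [0..<T] ! t) (fst (adv k init A T ! t)) = (map (\<lambda>t. E k (hp q t j)) [0..<T] ! t) (snd (adv k init A T ! t)) then 0 else 1) = (0::real)"
  proof -
    have "E k (hp q t j) 0 = E k (hp q t j) (q t)"
      using E_comm[of "q t" k "hp q t j"] qr hr hp_ne[OF j1, of q t] by auto
    thus ?thesis unfolding Ct using adv_nth[OF t] qd by simp
  qed
  have mig: "\<alpha> * real (migrations k l ((init # map (\<lambda>t. E k (hp q t j)) [0..<T]) ! t) (map (\<lambda>t. E k (hp q t j)) [0..<T] ! t))
     \<le> (if t = 0 then \<alpha> * real (k*l) else 2*\<alpha>*(if hp q (t-1) j = q t \<and> q (t-1) \<noteq> q t then 1 else 0))"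
  proof (cases t)
    case 0
    have "real (migrations k l init (E k (hp q 0 j))) \<le> real (k*l)" using mig_le[of k l init "E k (hp q 0 j)"] by linarith
    hence "\<alpha> * real (migrations k l init (E k (hp q 0 j))) \<le> \<alpha> * real (k*l)" using a by (intro mult_left_mono) auto
    thus ?thesis using 0 t by simp
  next
    case (Suc t')
    have pr: "(init # map (\<lambda>t. E k (hp q t j)) [0..<T]) ! t = E k (hp q t' j)" using Suc t by simp
    have M: "migrations k l (E k (hp q t' j)) (E k (hp q t j)) \<le> (if hp q t' j = hp q t j then 0 else 2)"
      using E_mig[of "hp q t' j" k "hp q t j" l] hr k by auto
    show ?thesis
    proof (cases "hp q t' j = hp q t j")
      case True
      hence "migrations k l (E k (hp q t' j)) (E k (hp q t j)) = 0" using M by simp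
      thus ?thesis unfolding pr Ct using Suc a by simp
    next
      case False
      hence c: "hp q t' j = q t \<and> q t' \<noteq> q t" using hp_step[OF j1, of q t'] Suc by auto
      have "real (migrations k l (E k (hp q t' j)) (E k (hp q t j))) \<le> 2" using M False by simp
      hence "\<alpha> * real (migrations k l (E k (hp q t' j)) (E k (hp q t j))) \<le> \<alpha> * 2" using a by (intro mult_left_mono) auto
      thus ?thesis unfolding pr Ct using Suc c by simp
    qed
  qed
  show "\<alpha> * real (migrations k l ((init # map (\<lambda>t. E k (hp q t j)) [0..<T]) ! t) (map (\<lambda>t. E k (hp q t j)) [0..<T] ! t)) +
        (if (map (\<lambda>t. E k (hp q t j)) [0..<T] ! t) (fst (adv k init A T ! t)) = (map (\<lambda>t. E k (hp q t j)) [0..<T] ! t) (snd (adv k init A T ! t)) then 0 else 1)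
     \<le> (if t = 0 then \<alpha> * real (k*l) else 2*\<alpha>*(if hp q (t-1) j = q t \<and> q (t-1) \<noteq> q t then 1 else 0))"
    using mig comm by linarith
qed

lemma card_fiber_le1:
  assumes "inj f" "finite S"
  shows "(\<Sum>j\<in>S. if f j = x then 1 else (0::real)) \<le> 1"
proof -
  have "(\<Sum>j\<in>S. if f j = x then 1 else (0::real)) = (\<Sum>j\<in>{j\<in>S. f j = x}. 1)"
    using sum.inter_filter[OF assms(2), of "\<lambda>_. 1::real" "\<lambda>j. f j = x"] by simp
  also have "\<dots> = real (card {j\<in>S. f j = x})" by simp
  also have "card {j\<in>S. f j = x} \<le> 1"
  proof -
    have "finite {j\<in>S. f j = x}" using assms(2) by simp
    moreover have "\<forall>a\<in>{j\<in>S. f j = x}. \<forall>b\<in>{j\<in>S. f j = x}. a = b" using assms(1) by (auto dest: injD)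
    ultimately have "card {j\<in>S. f j = x} \<le> Suc 0" by (simp only: card_le_Suc0_iff_eq)
    thus ?thesis by simp
  qed
  hence "real (card {j\<in>S. f j = x}) \<le> 1" by simp
  finally show ?thesis .
qed



lemma nt_ge: "0 \<le> nt k l init A t" "nt k l init A t \<le> 1" unfolding nt_def by auto

lemma q_change_nt:
  assumes k: "k \<ge> 2" and l: "l \<ge> 2"
    and ne: "lf k (pcf k init A t) \<noteq> lf k (pcf k init A (Suc t))"
  shows "nt k l init A t = 1"
proof (rule ccontr)
  assume "nt k l init A t \<noteq> 1"
  hence "migrations k l (pcf k init A t) (pcf k init A (Suc t)) = 0" unfolding nt_def by (auto split: if_splits)
  hence "\<forall>v<k*l. pcf k init A t v = pcf k init A (Suc t) v" by (simp add: mig_zero)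
  from lf_cong[OF this kl_less[OF k l]] ne show False by simp
qed

lemma hole_total:
  assumes k: "k \<ge> 2" and l: "l \<ge> 2" and vi: "valid_conf k l init" and on: "online_alg k l A"
    and a: "\<alpha> \<ge> 1"
    and qd: "q = (\<lambda>t. lf k (pcf k init A t))"
  shows "(\<Sum>j\<in>{2..k}. (\<Sum>t<Suc n. if t = 0 then \<alpha> * real (k*l) else 2*\<alpha>*(if hp q (t-1) j = q t \<and> q (t-1) \<noteq> q t then 1 else 0)))
    \<le> real (k - 1) * (\<alpha> * real (k*l)) + 2 * \<alpha> * (\<Sum>t<Suc n. nt k l init A t)"
proof -
  let ?g = "\<lambda>j t. if t = 0 then \<alpha> * real (k*l) else 2*\<alpha>*(if hp q (t-1) j = q t \<and> q (t-1) \<noteq> q t then 1 else (0::real))"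
  have e1: "(\<Sum>j\<in>{2..k}. \<Sum>t<Suc n. ?g j t) = (\<Sum>t<Suc n. \<Sum>j\<in>{2..k}. ?g j t)" by (rule sum.swap)
  have e2: "(\<Sum>t<Suc n. \<Sum>j\<in>{2..k}. ?g j t) = (\<Sum>j\<in>{2..k}. ?g j 0) + (\<Sum>t<n. \<Sum>j\<in>{2..k}. ?g j (Suc t))"
    by (rule sum.lessThan_Suc_shift)
  have e3: "(\<Sum>j\<in>{2..k}. ?g j 0) = real (k - 1) * (\<alpha> * real (k*l))" by simp
  have e4: "(\<Sum>t<n. \<Sum>j\<in>{2..k}. ?g j (Suc t)) \<le> (\<Sum>t<n. 2 * \<alpha> * nt k l init A t)"
  proof (rule sum_mono)
    fix t assume "t \<in> {..<n}"
    show "(\<Sum>j\<in>{2..k}. ?g j (Suc t)) \<le> 2 * \<alpha> * nt k l init A t"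
    proof (cases "q t = q (Suc t)")
      case True
      thus ?thesis using nt_ge[of k l init A t] a by simp
    next
      case False
      hence nt1: "nt k l init A t = 1" using q_change_nt[OF k l] qd by simp
      have s1: "(\<Sum>j\<in>{2..k}. ?g j (Suc t)) = 2 * \<alpha> * (\<Sum>j\<in>{2..k}. if hp q t j = q (Suc t) then 1 else 0)"
        using False by (simp add: sum_distrib_left)
      have s2: "(\<Sum>j\<in>{2..k}. if hp q t j = q (Suc t) then 1 else (0::real)) \<le> 1"
        by (rule card_fiber_le1[OF hp_inj]) simp
      have "2 * \<alpha> * (\<Sum>j\<in>{2..k}. if hp q t j = q (Suc t) then 1 else (0::real)) \<le> 2 * \<alpha> * 1"
        using s2 a by (intro mult_left_mono) auto
      thus ?thesis using nt1 s1 by simp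
    qed
  qed
  have e5: "(\<Sum>t<n. 2 * \<alpha> * nt k l init A t) \<le> 2 * \<alpha> * (\<Sum>t<Suc n. nt k l init A t)"
  proof -
    have "(\<Sum>t<n. 2 * \<alpha> * nt k l init A t) = 2 * \<alpha> * (\<Sum>t<n. nt k l init A t)" by (simp add: sum_distrib_left)
    moreover have "(\<Sum>t<n. nt k l init A t) \<le> (\<Sum>t<Suc n. nt k l init A t)" using nt_ge[of k l init A n] by simp
    ultimately show ?thesis using a by (simp add: mult_left_mono)
  qed
  show ?thesis using e1 e2 e3 e4 e5 by linarith
qed



theorem theorem2:
  fixes k l :: nat and \<alpha> :: real and init :: "nat \<Rightarrow> nat"
    and A :: "(nat \<times> nat) list \<Rightarrow> nat \<Rightarrow> nat"
  assumes "k \<ge> 2" and "\<alpha> \<ge> 1" and "l \<ge> 2"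
    and "valid_conf k l init" and "online_alg k l A"
  shows "\<forall>c < real k + (real k - 2) / (2 * \<alpha>).
           \<exists>\<sigma>. valid_reqs k l \<sigma> \<and> on_cost k l \<alpha> init A \<sigma> > c * off_cost k l \<alpha> init \<sigma>"
proof (intro allI impI)
  note k = assms(1) and a = assms(2) and l = assms(3) and vi = assms(4) and on = assms(5)
  fix c assume c: "c < real k + (real k - 2) / (2 * \<alpha>)"
  define B where "B = real k + (real k - 2) / (2 * \<alpha>)"
  define K where "K = \<alpha> * real (k * l)"
  have apos: "\<alpha> > 0" using a by simp
  have kr: "real k \<ge> 2" using k by simp
  have Bk: "B \<ge> real k" unfolding B_def using apos kr by simp
  have Bpos: "B > 0" using Bk kr by simp
  have cB: "c < B" using c unfolding B_def .
  have Kpos: "K \<ge> 0" unfolding K_def using apos by simp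
  obtain n where n: "\<bar>c\<bar> * B * K / (B - c) < real n" using reals_Archimedean2 by blast
  define T where "T = Suc n"
  define \<sigma> where "\<sigma> = adv k init A T"
  define q where "q = (\<lambda>t. lf k (pcf k init A t))"
  define N where "N = (\<Sum>t<T. nt k l init A t)"
  define ON where "ON = on_cost k l \<alpha> init A \<sigma>"
  define OFF where "OFF = off_cost k l \<alpha> init \<sigma>"
  have Nnn: "N \<ge> 0" unfolding N_def by (intro sum_nonneg) (simp add: nt_ge)
  have vs: "valid_reqs k l \<sigma>" unfolding \<sigma>_def using adv_valid[OF k l vi on] by blast
  have ON1: "ON \<ge> real T + (2*\<alpha> - 1) * N"
  proof -
    have "ON \<ge> (\<Sum>t<T. 1 + (2*\<alpha> - 1) * nt k l init A t)"
      unfolding ON_def \<sigma>_def by (rule on_lb[OF k l vi on a])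
    also have "(\<Sum>t<T. 1 + (2*\<alpha> - 1) * nt k l init A t) = real T + (2*\<alpha> - 1) * N"
      unfolding N_def by (simp add: sum.distrib sum_distrib_left)
    finally show ?thesis .
  qed
  have ON2: "ON \<ge> real T + N"
  proof -
    have "1 * N \<le> (2*\<alpha> - 1) * N" using Nnn a by (intro mult_right_mono) auto
    thus ?thesis using ON1 by linarith
  qed
  have OFFnn: "OFF \<ge> 0" unfolding OFF_def using off_nonneg[of \<alpha> k l init] apos vi by simp
  have S: "real k * OFF \<le> real k * K + real T"
  proof -
    have each: "OFF \<le> K + (\<Sum>t<T. if q t = i then 1 else 0)" if i: "i \<in> {1..k}" for i
    proof -
      have "OFF \<le> sched_cost k l \<alpha> init (replicate T (E k i)) \<sigma>"
        unfolding OFF_def \<sigma>_def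
        by (rule off_le) (use apos E_valid[of i k l] i k l in auto)
      also have "\<dots> \<le> K + (\<Sum>t<T. if q t = i then 1 else 0)"
        unfolding \<sigma>_def K_def q_def using static_cost[OF k l vi on a, of i T] i by simp
      finally show ?thesis .
    qed
    have "(\<Sum>i\<in>{1..k}. OFF) \<le> (\<Sum>i\<in>{1..k}. K + (\<Sum>t<T. if q t = i then 1 else 0))"
      by (rule sum_mono) (rule each)
    also have "\<dots> = real k * K + (\<Sum>i\<in>{1..k}. \<Sum>t<T. if q t = i then 1 else (0::real))"
      by (simp add: sum.distrib)
    also have "(\<Sum>i\<in>{1..k}. \<Sum>t<T. if q t = i then 1 else (0::real)) = (\<Sum>t<T. \<Sum>i\<in>{1..k}. if q t = i then 1 else (0::real))"
      by (rule sum.swap)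
    also have "\<dots> = (\<Sum>t<T. 1)"
    proof (rule sum.cong)
      fix t assume "t \<in> {..<T}"
      have "q t \<in> {1..k}" using q_range[OF k l vi on, of t] unfolding q_def by simp
      thus "(\<Sum>i\<in>{1..k}. if q t = i then 1 else (0::real)) = 1" by (simp add: sum.delta)
    qed simp
    finally show ?thesis by simp
  qed
  have H: "real (k - 1) * OFF \<le> real (k - 1) * K + 2 * \<alpha> * N"
  proof -
    let ?g = "\<lambda>j t. if t = 0 then \<alpha> * real (k*l) else 2*\<alpha>*(if hp q (t-1) j = q t \<and> q (t-1) \<noteq> q t then 1 else (0::real))"
    have each: "OFF \<le> (\<Sum>t<T. ?g j t)" if j: "j \<in> {2..k}" for j
    proof -
      have hr: "1 \<le> hp q t j \<and> hp q t j \<le> k" for t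
        using hp_range[of q k j t] q_range[OF k l vi on] j unfolding q_def by auto
      have "OFF \<le> sched_cost k l \<alpha> init (map (\<lambda>t. E k (hp q t j)) [0..<T]) \<sigma>"
        unfolding OFF_def \<sigma>_def
        by (rule off_le) (use apos E_valid hr k l in auto)
      also have "\<dots> \<le> (\<Sum>t<T. ?g j t)"
        unfolding \<sigma>_def using hole_cost[OF k l vi on a, of j q T] j q_def by simp
      finally show ?thesis .
    qed
    have "(\<Sum>j\<in>{2..k}. OFF) \<le> (\<Sum>j\<in>{2..k}. \<Sum>t<T. ?g j t)"
      by (rule sum_mono) (rule each)
    also have "\<dots> \<le> real (k - 1) * (\<alpha> * real (k*l)) + 2 * \<alpha> * (\<Sum>t<Suc n. nt k l init A t)"
      unfolding T_def by (rule hole_total[OF k l vi on a q_def])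
    finally show ?thesis unfolding K_def N_def T_def by simp
  qed
  define X where "X = OFF - K"
  have X1: "real k * X \<le> real T" using S unfolding X_def by (simp add: algebra_simps)
  have km1: "real (k - 1) = real k - 1" using k by simp
  have X2: "(real k - 1) * X \<le> 2 * \<alpha> * N" using H unfolding X_def km1 by (simp add: algebra_simps)
  have X3: "(real k - 2) / (2 * \<alpha>) * X \<le> N"
  proof -
    have d: "(real k - 2) / (2 * \<alpha>) \<ge> 0" using kr apos by simp
    have "(real k - 2) / (2 * \<alpha>) * ((real k - 1) * X) \<le> (real k - 2) / (2 * \<alpha>) * (2 * \<alpha> * N)"
      using X2 d by (rule mult_left_mono)
    also have "\<dots> = (real k - 2) * N" using apos by simp
    also have "\<dots> \<le> (real k - 1) * N" using Nnn by (simp add: mult_right_mono)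
    finally have f: "(real k - 1) * ((real k - 2) / (2 * \<alpha>) * X) \<le> (real k - 1) * N" by (simp add: algebra_simps)
    have "real k - 1 > 0" using kr by simp
    from mult_le_cancel_left_pos[OF this] f show ?thesis by blast
  qed
  have BX: "B * X \<le> ON" using X1 X3 ON2 unfolding B_def by (simp add: algebra_simps)
  have BOFF: "B * OFF \<le> ON + B * K" using BX unfolding X_def by (simp add: algebra_simps)
  have Tge: "real T \<ge> 1" unfolding T_def by simp
  have ONpos: "ON \<ge> 1" using ON2 Nnn Tge by linarith
  have "c * OFF < ON"
  proof (cases "c \<le> 0")
    case True
    hence "c * OFF \<le> 0" using OFFnn by (simp add: mult_nonpos_nonneg)
    thus ?thesis using ONpos by linarith
  next
    case False
    hence cpos: "c > 0" by simp
    have Bc: "B - c > 0" using cB by simp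
    have "c * B * K / (B - c) < real T" using n cpos unfolding T_def by simp
    hence cK: "c * B * K < (B - c) * real T" using Bc by (simp add: divide_less_eq mult.commute)
    have "(B - c) * real T \<le> (B - c) * ON" using ON2 Nnn Bc by (intro mult_left_mono) auto
    have "B * (c * OFF) = c * (B * OFF)" by simp
    also have "\<dots> \<le> c * (ON + B * K)" using BOFF cpos by (intro mult_left_mono) auto
    also have "\<dots> = c * ON + c * B * K" by (simp add: algebra_simps)
    also have "\<dots> < c * ON + (B - c) * ON" using cK \<open>(B - c) * real T \<le> (B - c) * ON\<close> by linarith
    also have "\<dots> = B * ON" by (simp add: algebra_simps)
    finally show ?thesis using Bpos by simp
  qed
  thus "\<exists>\<sigma>. valid_reqs k l \<sigma> \<and> on_cost k l \<alpha> init A \<sigma> > c * off_cost k l \<alpha> init \<sigma>"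
    using vs unfolding ON_def OFF_def by blast
qed

end
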